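(* Consider the full information setting of online multiclass classification (every prediction reveals the true label $y_t$, i.e. the feedback graph is complete, so $\mathcal{Q}=[K]$, $\gamma_t=0$ and $v_t=1$ for all $t$). Suppose that for every round $t$, $\ell_t=\ell(\cdot,\mathbf{x}_t,y_t)$ is a regular surrogate loss with respect to $\ell$ with constant $L$, and that the OCO algorithm $\mathcal{A}$ satisfies, for some $h:\mathcal{W}\to\mathbb{R}_+$ and every $\mathbf{U}\in\mathcal{W}$, $\sum_{t=1}^T(\widehat\ell_t(\mathbf{W}_t)-\widehat\ell_t(\mathbf{U}))\le h(\mathbf{U})\sqrt{\sum_{t=1}^T\|\widehat{\mathbf{g}}_t\|^2}$ with $\widehat{\mathbf{g}}_t=v_t\nabla\ell_t(\mathbf{W}_t)$. Run Gappletron with $\mathcal{A}$ and a gap map $a:\mathbb{R}^{K\times d}\times\mathbb{R}^d\to[0,1]$ satisfying $a(\mathbf{W}_t,\mathbf{x}_t)=\ell(\mathbf{W}_t,\mathbf{x}_t,y_t^\star)$. Then for every $\delta\in(0,1)$, with probability at least $1-\delta$, $$\sum_{t=1}^T\mathbb{1}[y_t'\ne y_t]\le\sum_{t=1}^T\ell_t(\mathbf{U})+KLh(\mathbf{U})^2+\frac{3K+1}{2}\ln\frac1\delta\qquad\forall\,\mathbf{U}\in\mathcal{W}.$$ Furthermore, for all $\mathbf{U}\in\mathcal{W}$ such that $\sum_{t=1}^T\ell_t(\mathbf{U})=0$, with probability at least $1-\delta$, $\sum_{t=1}^T\mathbb{1}[y_t'\ne y_t]\le 4Lh(\mathbf{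U})^2+\frac{11}{4}\ln\frac1\delta$.
   Context: Setting: for $t=1,\dots,T$ an oblivious adversary fixes $\mathbf{x}_t\in\mathbb{R}^d$, $y_t\in[K]$; the learner predicts $y_t'\in[K]$ and then observes $y_t$. Predictors $\mathbf{W}\in\mathcal{W}\subseteq\mathbb{R}^{K\times d}$ ($\mathcal{W}$ convex), rows $\mathbf{W}^k$, identified with vectors of $\mathbb{R}^{Kd}$; $\|\cdot\|$ a fixed norm on $\mathbb{R}^{Kd}$. $\ell:\mathcal{W}\times\mathbb{R}^d\times[K]\to\mathbb{R}_+$ is convex in $\mathbf{W}$ with $\frac{K-1}{K}\ell(\mathbf{W},\mathbf{x},y)+\frac1K\ell(\mathbf{W},\mathbf{x},y^\star)\ge1$ for all $\mathbf{W},\mathbf{x}$ and all $y\ne y^\star:=\arg\max_k\langle\mathbf{W}^k,\mathbf{x}\rangle$; $\ell_t$ is a regular surrogate loss with constant $L>0$ if moreover $\|\nabla\ell_t(\mathbf{W})\|^2\le2L\ell_t(\mathbf{W})$ for all $\mathbf{W}\in\mathcal{W}$. Gappletron in this setting (general version: inputs revealing set $\mathcal{Q}$, minimum dominating set $S$ of the feedback graph with $|S|=\rho$, OCO algorithm $\mathcal{A}$, $\gamma\ge0$, gap map $a$): $\mathbf{W}_1$ from $\mathcal{A}$; at round $t$: $y_t^\star=\arg\max_k\langle\mathbf{W}_t^k,\mathbf{x}_t\rangle$; $\gamma_t=0$ if $y_t^\star\in\mathcal{Q}$ (always the case here); $a_t=a(\mathbf{W}_t,\mathbf{x}_t)$;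 $\zeta_t=\mathbb{1}[\gamma_t\le a_t]$; $\mathbf{p}_t'=(1-\zeta_ta_t-(1-\zeta_t)\gamma_t)\mathbf{e}_{y_t^\star}+\zeta_ta_t\frac1K\mathbf{1}+(1-\zeta_t)\frac{\gamma_t}{\rho}\mathbf{1}_S$ (here $\mathbf{p}_t'=(1-a_t)\mathbf{e}_{y_t^\star}+a_t\frac1K\mathbf{1}$); predict $y_t'\sim\mathbf{p}_t'$; $v_t=\mathbb{1}[y_t\text{ observed}]/P_t(y_t\text{ observed})=1$; $\widehat\ell_t=v_t\ell_t$ is fed to $\mathcal{A}$, which returns $\mathbf{W}_{t+1}$. *)

theory Defs
  imports "HOL-Analysis.Analysis" "HOL-Probability.Probability"
begin

text \<open>Predictors are K x d real matrices, represented as \<open>real^'d^'k\<close>: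
  row \<open>W $ k\<close> is the row vector \<open>W^k\<close>; labels [K] are the elements of the
  finite type \<open>'k\<close>, so K = CARD('k).\<close>

definition ystar :: "real^'d^'k \<Rightarrow> real^'d \<Rightarrow> 'k" where
  "ystar W x = (SOME k. \<forall>j. (W $ j) \<bullet> x \<le> (W $ k) \<bullet> x)"

definition is_norm :: "('a::real_vector \<Rightarrow> real) \<Rightarrow> bool" where
  "is_norm N \<longleftrightarrow> (\<forall>v. 0 \<le> N v) \<and> (\<forall>v. N v = 0 \<longleftrightarrow> v = 0)
     \<and> (\<forall>c v. N (c *\<^sub>R v) = \<bar>c\<bar> * N v) \<and> (\<forall>u v. N (u + v) \<le> N u + N v)"

text \<open>Gappletron's sampling distribution in the full-information setting
  (gamma_t = 0, zeta_t = 1): p' = (1 - a) e_{y*} + a (1/K) 1, realised as the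
  mixture "with probability a draw uniformly from [K], else play y*".\<close>
definition gappletron_pmf :: "real \<Rightarrow> 'k \<Rightarrow> ('k::finite) pmf" where
  "gappletron_pmf a ys =
     bind_pmf (bernoulli_pmf a) (\<lambda>b. if b then pmf_of_set UNIV else return_pmf ys)"

end

theory Submission
  imports Defs
begin

lemma pmf_gap:
  fixes ys :: "'k::finite"
  assumes "0 \<le> a" "a \<le> 1"
  shows "pmf (gappletron_pmf a ys) b = a / real CARD('k) + (1 - a) * (if b = ys then 1 else 0)"
  using assms unfolding gappletron_pmf_def
  by (simp add: pmf_bind pmf_return indicator_def)

lemma mgf_single:
  fixes q :: "'k::finite pmf"
  shows "measure_pmf.expectation q (\<lambda>b. exp (lam * (if b \<noteq> yy then 1 else 0)))
       = 1 + (exp lam - 1) * (1 - pmf q yy)"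
proof -
  have "measure_pmf.expectation q (\<lambda>b. exp (lam * (if b \<noteq> yy then 1 else 0)))
     = (\<Sum>b\<in>UNIV. exp (lam * (if b \<noteq> yy then 1 else 0)) * pmf q b)"
    by (subst integral_measure_pmf[of UNIV]) (auto simp: mult.commute)
  also have "\<dots> = (\<Sum>b\<in>UNIV. exp lam * pmf q b + (1 - exp lam) * (if b = yy then pmf q b else 0))"
    by (intro sum.cong) (auto simp: algebra_simps)
  also have "\<dots> = exp lam * (\<Sum>b\<in>UNIV. pmf q b) + (1 - exp lam) * pmf q yy"
    by (simp add: sum.distrib sum_distrib_left[symmetric])
  also have "(\<Sum>b\<in>UNIV. pmf q b) = 1"
    by (simp add: sum_pmf_eq_1)
  finally show ?thesis by (simp add: algebra_simps)
qed

lemma chernoff: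
  fixes q :: "nat \<Rightarrow> 'k::finite pmf" and yy :: "nat \<Rightarrow> 'k" and T :: nat and dflt :: 'k
  assumes lam: "lam > 0" and dl: "0 < \<delta>"
  defines "P \<equiv> Pi_pmf {1..T} dflt q"
  shows "measure_pmf.prob P {yp. (\<Sum>t=1..T. if yp t \<noteq> yy t then 1 else 0 :: real)
     \<le> ((exp lam - 1) * (\<Sum>t=1..T. 1 - pmf (q t) (yy t)) + ln (1 / \<delta>)) / lam} \<ge> 1 - \<delta>"
proof -
  define Z where "Z = (\<lambda>t b. if b \<noteq> yy t then 1 else 0 :: real)"
  define M where "M = (\<lambda>yp. \<Sum>t=1..T. Z t (yp t))"
  define c where "c = ((exp lam - 1) * (\<Sum>t=1..T. 1 - pmf (q t) (yy t)) + ln (1 / \<delta>)) / lam"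
  define u where "u = (\<lambda>yp. \<Prod>t\<in>{1..T}. exp (lam * Z t (yp t)))"
  have u_eq: "u yp = exp (lam * M yp)" for yp
    unfolding u_def M_def by (simp add: exp_sum sum_distrib_left)
  have M_le: "M yp \<le> real T" for yp
  proof -
    have "M yp \<le> (\<Sum>t=1..T. 1)" unfolding M_def Z_def by (intro sum_mono) auto
    then show ?thesis by simp
  qed
  have int: "integrable (measure_pmf P) u"
  proof (rule measure_pmf.integrable_const_bound[where B = "exp (lam * real T)"])
    show "AE x in measure_pmf P. norm (u x) \<le> exp (lam * real T)"
      using M_le lam by (auto simp: u_eq)
  qed simp
  have Eu: "measure_pmf.expectation P u = (\<Prod>t\<in>{1..T}. 1 + (exp lam - 1) * (1 - pmf (q t) (yy t)))"
    unfolding u_def P_def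
    by (subst expectation_prod_Pi_pmf) (auto simp: Z_def mgf_single integrable_measure_pmf_finite)
  have "(\<Prod>t\<in>{1..T}. 1 + (exp lam - 1) * (1 - pmf (q t) (yy t)))
      \<le> (\<Prod>t\<in>{1..T}. exp ((exp lam - 1) * (1 - pmf (q t) (yy t))))"
  proof (intro prod_mono conjI)
    fix t
    have "pmf (q t) (yy t) \<le> 1" by (rule pmf_le_1)
    moreover have "exp lam \<ge> 1" using lam by simp
    ultimately show "0 \<le> 1 + (exp lam - 1) * (1 - pmf (q t) (yy t))"
      by (simp add: add_nonneg_nonneg)
    show "1 + (exp lam - 1) * (1 - pmf (q t) (yy t)) \<le> exp ((exp lam - 1) * (1 - pmf (q t) (yy t)))"
      by (metis add.commute exp_ge_add_one_self)
  qed
  also have "\<dots> = exp ((exp lam - 1) * (\<Sum>t=1..T. 1 - pmf (q t) (yy t)))"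
    by (simp add: exp_sum sum_distrib_left)
  finally have Eu_le: "measure_pmf.expectation P u \<le> exp ((exp lam - 1) * (\<Sum>t=1..T. 1 - pmf (q t) (yy t)))"
    using Eu by simp
  have sub: "{yp. \<not> M yp \<le> c} \<subseteq> {yp \<in> space (measure_pmf P). u yp \<ge> exp (lam * c)}"
    using lam by (auto simp: u_eq)
  have "measure_pmf.prob P {yp. \<not> M yp \<le> c} \<le> measure_pmf.prob P {yp \<in> space (measure_pmf P). u yp \<ge> exp (lam * c)}"
    by (rule measure_pmf.finite_measure_mono[OF sub]) simp
  also have "\<dots> \<le> measure_pmf.expectation P u / exp (lam * c)"
    by (rule integral_Markov_inequality_measure[OF int, where A = UNIV]) (auto simp: u_def intro!: prod_nonneg)
  also have "\<dots> \<le> exp ((exp lam - 1) * (\<Sum>t=1..T. 1 - pmf (q t) (yy t))) / exp (lam * c)"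
    by (intro divide_right_mono Eu_le) simp
  also have "\<dots> = \<delta>"
    using lam dl by (simp add: c_def exp_diff[symmetric] ln_div)
  finally have bad: "measure_pmf.prob P {yp. \<not> M yp \<le> c} \<le> \<delta>" .
  have "measure_pmf.prob P {yp. M yp \<le> c} = 1 - measure_pmf.prob P {yp. \<not> M yp \<le> c}"
    using measure_pmf.prob_compl[of "{yp. \<not> M yp \<le> c}" P]
    by (simp add: Compl_eq_Diff_UNIV[symmetric] Collect_neg_eq[symmetric])
  with bad show ?thesis unfolding M_def Z_def c_def by simp
qed

lemma exp_le_inv: "0 \<le> (y::real) \<Longrightarrow> y < 1 \<Longrightarrow> exp y \<le> 1 / (1 - y)"
proof -
  assume "0 \<le> y" "y < 1"
  have "1 - y \<le> exp (-y)" using exp_ge_add_one_self[of "-y"] by simp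
  then have "(1 - y) * exp y \<le> exp (-y) * exp y" by (intro mult_right_mono) auto
  then have "(1 - y) * exp y \<le> 1" by (simp add: exp_minus field_simps)
  with \<open>y < 1\<close> show ?thesis by (simp add: field_simps)
qed

lemma exp_le_inv2: "0 \<le> (l::real) \<Longrightarrow> l < 2 \<Longrightarrow> exp l \<le> 1 / (1 - l/2)^2"
proof -
  assume "0 \<le> l" "l < 2"
  have "exp l = exp (l/2) ^ 2" by (simp add: exp_double[symmetric] power2_eq_square exp_add[symmetric])
  also have "\<dots> \<le> (1 / (1 - l/2)) ^ 2"
    using exp_le_inv[of "l/2"] \<open>0 \<le> l\<close> \<open>l < 2\<close> by (intro power_mono) auto
  finally show ?thesis by (simp add: power_divide)
qed

lemma const1:
  fixes K :: real assumes K: "K \<ge> 1"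
  shows "(exp (2 / (3*K+1)) - 1) * (1 - 1/K) / (2 / (3*K+1)) \<le> 1 - 1 / (2*K)"
proof -
  define l where "l = 2 / (3*K+1)"
  have l0: "0 < l" "l < 2" using K by (auto simp: l_def field_simps)
  have "exp l \<le> 1 / (1 - l/2)^2" using exp_le_inv2 l0 by simp
  also have "1 - l/2 = 3*K / (3*K+1)" using K by (simp add: l_def field_simps)
  finally have E: "exp l \<le> (3*K+1)^2 / (9*K^2)" by (simp add: power_divide power_mult_distrib)
  have "(exp l - 1) * (1 - 1/K) \<le> ((3*K+1)^2 / (9*K^2) - 1) * (1 - 1/K)"
    using E K by (intro mult_right_mono) (auto simp: field_simps)
  also have "\<dots> \<le> (1 - 1/(2*K)) * l"
  proof -
    have e1: "((3*K+1)^2 / (9*K^2) - 1) * (1 - 1/K) = (6*K+1)*(K-1) / (9*K^3)"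
      using K by (simp add: field_simps power2_eq_square power3_eq_cube)
    have e2: "(1 - 1/(2*K)) * l = (2*K-1) / (K*(3*K+1))"
    proof -
      have p: "K*(3*K+1) > 0" "3*K+1 > 0" "K > 0" using K by auto
      have "(1 - 1/(2*K)) * l = ((2*K-1)/(2*K)) * (2/(3*K+1))" using p by (simp add: l_def field_simps)
      also have "\<dots> = (2*K-1) / (K*(3*K+1))" using p by (simp add: field_simps)
      finally show ?thesis .
    qed
    have "(6*K+1)*(K-1)*(K*(3*K+1)) \<le> (2*K-1) * (9*K^3)"
    proof -
      have "(6*K+1)*(K-1)*(3*K+1) \<le> 9*K^2*(2*K-1)" using K by (simp add: algebra_simps power2_eq_square power3_eq_cube)
      then have "K * ((6*K+1)*(K-1)*(3*K+1)) \<le> K * (9*K^2*(2*K-1))" using K by (intro mult_left_mono) auto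
      then show ?thesis by (simp add: algebra_simps power2_eq_square power3_eq_cube)
    qed
    then have "(6*K+1)*(K-1) / (9*K^3) \<le> (2*K-1) / (K*(3*K+1))"
    proof -
      have p: "9*K^3 > 0" "K*(3*K+1) > 0" using K by auto
      show ?thesis using p \<open>(6*K+1)*(K-1)*(K*(3*K+1)) \<le> (2*K-1) * (9*K^3)\<close>
        by (simp add: divide_le_eq le_divide_eq mult.commute mult.left_commute)
    qed
    then show ?thesis using e1 e2 by simp
  qed
  finally show ?thesis using l0 by (simp add: l_def[symmetric] pos_divide_le_eq)
qed

lemma const2: "(exp (4/11::real) - 1) / (4/11) \<le> 2"
proof -
  have "exp (4/11::real) \<le> 1 / (1 - (4/11)/2)^2" by (rule exp_le_inv2) auto
  then have "exp (4/11::real) \<le> 121/81" by (simp add: power2_eq_square)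
  then show ?thesis by simp
qed

lemma key_ineq:
  fixes S B H L p K :: real
  assumes K: "K \<ge> 1" and S: "S \<ge> 0" and H: "H \<ge> 0" and L: "L > 0"
    and reg: "S \<le> B + H * sqrt (2*L*S)" and p: "0 \<le> p" "p \<le> 1 - 1/(2*K)"
  shows "p * S \<le> B + K * L * H^2"
proof -
  define w where "w = H * sqrt (2*L*S)"
  have w0: "w \<ge> 0" using H L S by (simp add: w_def)
  have w2: "w^2 = 2*L*H^2*S" using L S by (simp add: w_def power_mult_distrib)
  define C where "C = 2*K^2*L*H^2"
  have C0: "C \<ge> 0" using L by (simp add: C_def)
  have sq1: "(2*K*w)^2 = 4*K^2*w^2" by (simp add: power_mult_distrib)
  have sq2: "4*K^2*(2*L*H^2*S) = 4*S*C" unfolding C_def by (simp add: ac_simps)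
  have sq3: "(S+C)^2 = (S-C)^2 + 4*S*C" by (simp add: power2_sum power2_diff)
  have sq4: "(S-C)^2 \<ge> 0" by simp
  have sqle: "(2*K*w)^2 \<le> (S + C)^2" using sq1 sq2 sq3 sq4 w2 by simp
  have SC0: "0 \<le> S + C" using S C0 by linarith
  have amgm: "2*K*w \<le> S + C" by (rule power2_le_imp_le[OF sqle SC0])
  have Kp: "2*K > 0" using K by simp
  have eqC: "S/(2*K) + K*L*H^2 = (S + C)/(2*K)"
    using Kp unfolding C_def by (simp add: add_divide_distrib power2_eq_square)
  have wle: "w \<le> S/(2*K) + K*L*H^2"
    unfolding eqC using amgm Kp by (simp add: pos_le_divide_eq mult.commute)
  have "p * S \<le> (1 - 1/(2*K)) * S" using p S by (intro mult_right_mono) auto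
  also have "\<dots> = S - S/(2*K)" by (simp add: left_diff_distrib)
  also have "\<dots> \<le> B + K*L*H^2" using wle reg unfolding w_def by linarith
  finally show ?thesis .
qed

theorem theorem3:
  fixes \<W> :: "(real^'d::finite^'k::finite) set"
    and nrm :: "real^'d^'k \<Rightarrow> real"
    and loss :: "real^'d^'k \<Rightarrow> real^'d \<Rightarrow> 'k \<Rightarrow> real"
    and grad :: "nat \<Rightarrow> real^'d^'k \<Rightarrow> real^'d^'k"
    and x :: "nat \<Rightarrow> real^'d" and y :: "nat \<Rightarrow> 'k"
    and A :: "(real^'d^'k \<Rightarrow> real) list \<Rightarrow> real^'d^'k"
    and h :: "real^'d^'k \<Rightarrow> real"
    and a :: "real^'d^'k \<Rightarrow> real^'d \<Rightarrow> real"
    and L \<delta> :: real and T :: nat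
  defines "K \<equiv> real CARD('k)"
    and "Wt \<equiv> (\<lambda>t. A (map (\<lambda>s V. loss V (x s) (y s)) [1..<t]))"
  assumes W_convex: "convex \<W>"
    and nrm: "is_norm nrm"
    and loss_nonneg: "\<And>W xx yy. W \<in> \<W> \<Longrightarrow> 0 \<le> loss W xx yy"
    and loss_convex: "\<And>xx yy. convex_on \<W> (\<lambda>W. loss W xx yy)"
    and loss_surrogate: "\<And>W xx yy. W \<in> \<W> \<Longrightarrow> yy \<noteq> ystar W xx \<Longrightarrow>
           (K - 1) / K * loss W xx yy + 1 / K * loss W xx (ystar W xx) \<ge> 1"
    and grad: "\<And>t W. t \<in> {1..T} \<Longrightarrow> W \<in> \<W> \<Longrightarrow>
           ((\<lambda>V. loss V (x t) (y t)) has_derivative (\<lambda>H. grad t W \<bullet> H)) (at W within \<W>)"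
    and L_pos: "L > 0"
    and regular: "\<And>t W. t \<in> {1..T} \<Longrightarrow> W \<in> \<W> \<Longrightarrow>
           (nrm (grad t W))\<^sup>2 \<le> 2 * L * loss W (x t) (y t)"
    and A_range: "\<And>t. t \<in> {1..T} \<Longrightarrow> Wt t \<in> \<W>"
    and h_nonneg: "\<And>U. U \<in> \<W> \<Longrightarrow> 0 \<le> h U"
    and regret: "\<And>U. U \<in> \<W> \<Longrightarrow>
           (\<Sum>t=1..T. loss (Wt t) (x t) (y t) - loss U (x t) (y t))
             \<le> h U * sqrt (\<Sum>t=1..T. (nrm (grad t (Wt t)))\<^sup>2)"
    and a_range: "\<And>W xx. a W xx \<in> {0..1}"
    and a_gap: "\<And>t. t \<in> {1..T} \<Longrightarrow>
           a (Wt t) (x t) = loss (Wt t) (x t) (ystar (Wt t) (x t))"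
    and delta: "0 < \<delta>" "\<delta> < 1"
  defines "P \<equiv> Pi_pmf {1..T} undefined
              (\<lambda>t. gappletron_pmf (a (Wt t) (x t)) (ystar (Wt t) (x t)))"
  shows "measure_pmf.prob P
           {yp. \<forall>U\<in>\<W>. (\<Sum>t=1..T. if yp t \<noteq> y t then 1 else 0 :: real)
               \<le> (\<Sum>t=1..T. loss U (x t) (y t)) + K * L * (h U)\<^sup>2
                  + (3 * K + 1) / 2 * ln (1 / \<delta>)} \<ge> 1 - \<delta>
         \<and> (\<forall>U\<in>\<W>. (\<Sum>t=1..T. loss U (x t) (y t)) = 0 \<longrightarrow>
           measure_pmf.prob P
             {yp. (\<Sum>t=1..T. if yp t \<noteq> y t then 1 else 0 :: real)
                 \<le> 4 * L * (h U)\<^sup>2 + 11 / 4 * ln (1 / \<delta>)} \<ge> 1 - \<delta>)"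
proof -
  have K1: "K \<ge> 1" unfolding K_def by (simp add: Suc_le_eq)
  define ys where "ys = (\<lambda>t. ystar (Wt t) (x t))"
  define q where "q = (\<lambda>t. gappletron_pmf (a (Wt t) (x t)) (ys t))"
  define e where "e = (\<lambda>t. 1 - pmf (q t) (y t))"
  define S where "S = (\<Sum>t=1..T. loss (Wt t) (x t) (y t))"
  have P_eq: "P = Pi_pmf {1..T} undefined q" unfolding P_def q_def ys_def by simp
  have e0: "e t \<ge> 0" for t unfolding e_def using pmf_le_1 by simp
  have e_le: "e t \<le> (1 - 1/K) * loss (Wt t) (x t) (y t)" if t: "t \<in> {1..T}" for t
  proof -
    define aa where "aa = a (Wt t) (x t)"
    have a01: "0 \<le> aa" "aa \<le> 1" using a_range[of "Wt t" "x t"] by (auto simp: aa_def)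
    have pm: "pmf (q t) (y t) = aa / K + (1 - aa) * (if y t = ys t then 1 else 0)"
      unfolding q_def K_def aa_def using a01 by (simp add: pmf_gap aa_def)
    have ag: "loss (Wt t) (x t) (ys t) = aa" using a_gap[OF t] by (simp add: aa_def ys_def)
    show ?thesis
    proof (cases "y t = ys t")
      case True
      have l: "loss (Wt t) (x t) (y t) = aa" using ag True by simp
      have "e t = 1 - (aa/K + (1 - aa))" using pm True by (simp add: e_def)
      also have "\<dots> = aa - aa/K" by simp
      also have "\<dots> = (1 - 1/K) * aa" by (simp add: left_diff_distrib)
      finally show ?thesis using l by simp
    next
      case False
      have H: "(K - 1) / K * loss (Wt t) (x t) (y t) + 1 / K * aa \<ge> 1"
        using loss_surrogate[OF A_range[OF t], of "y t" "x t"] False ag by (simp add: ys_def)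
      have k1: "(K - 1) / K = 1 - 1/K" using K1 by (simp add: diff_divide_distrib)
      have k2: "1 / K * aa = aa / K" by simp
      have "e t = 1 - aa/K" using pm False by (simp add: e_def)
      moreover have "1 \<le> (1 - 1/K) * loss (Wt t) (x t) (y t) + aa / K" using H unfolding k1 k2 .
      ultimately show ?thesis by linarith
    qed
  qed
  have sumE: "(\<Sum>t=1..T. e t) \<le> (1 - 1/K) * S"
    unfolding S_def sum_distrib_left by (intro sum_mono e_le) auto
  have sumE0: "(\<Sum>t=1..T. e t) \<ge> 0" by (intro sum_nonneg e0)
  have S0: "S \<ge> 0" unfolding S_def by (intro sum_nonneg loss_nonneg A_range) auto
  have reg: "S \<le> (\<Sum>t=1..T. loss U (x t) (y t)) + h U * sqrt (2*L*S)" if U: "U \<in> \<W>" for U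
  proof -
    have "(\<Sum>t=1..T. (nrm (grad t (Wt t)))\<^sup>2) \<le> (\<Sum>t=1..T. 2 * L * loss (Wt t) (x t) (y t))"
      by (intro sum_mono regular A_range) auto
    also have "\<dots> = 2*L*S" by (simp add: S_def sum_distrib_left)
    finally have "sqrt (\<Sum>t=1..T. (nrm (grad t (Wt t)))\<^sup>2) \<le> sqrt (2*L*S)" by simp
    then have "h U * sqrt (\<Sum>t=1..T. (nrm (grad t (Wt t)))\<^sup>2) \<le> h U * sqrt (2*L*S)"
      using h_nonneg[OF U] by (intro mult_left_mono) auto
    moreover have "(\<Sum>t=1..T. loss (Wt t) (x t) (y t) - loss U (x t) (y t)) = S - (\<Sum>t=1..T. loss U (x t) (y t))"
      unfolding S_def by (rule sum_subtractf)
    ultimately show ?thesis using regret[OF U] by linarith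
  qed
  define M where "M = (\<lambda>yp. (\<Sum>t=1..T. if yp t \<noteq> y t then 1 else 0 :: real))"
  have lnd: "ln (1/\<delta>) \<ge> 0" using delta by simp
  show ?thesis
  proof
    define lam where "lam = 2 / (3*K+1)"
    have lam0: "lam > 0" using K1 by (simp add: lam_def)
    define p where "p = (exp lam - 1) * (1 - 1/K) / lam"
    have p0: "p \<ge> 0" using lam0 K1 by (simp add: p_def)
    have p1: "p \<le> 1 - 1/(2*K)" using const1[OF K1] by (simp add: p_def lam_def)
    have ch: "measure_pmf.prob P {yp. M yp \<le> ((exp lam - 1) * (\<Sum>t=1..T. e t) + ln (1 / \<delta>)) / lam} \<ge> 1 - \<delta>"
      unfolding P_eq M_def e_def using chernoff[OF lam0 delta(1)] by blast
    have sub: "{yp. M yp \<le> ((exp lam - 1) * (\<Sum>t=1..T. e t) + ln (1 / \<delta>)) / lam} \<subseteq>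
      {yp. \<forall>U\<in>\<W>. M yp \<le> (\<Sum>t=1..T. loss U (x t) (y t)) + K * L * (h U)\<^sup>2
                  + (3 * K + 1) / 2 * ln (1 / \<delta>)}"
    proof (intro subsetI CollectI ballI)
      fix yp U assume yp: "yp \<in> {yp. M yp \<le> ((exp lam - 1) * (\<Sum>t=1..T. e t) + ln (1 / \<delta>)) / lam}"
        and U: "U \<in> \<W>"
      have "(exp lam - 1) * (\<Sum>t=1..T. e t) / lam \<le> (exp lam - 1) * ((1 - 1/K) * S) / lam"
        using lam0 sumE by (intro divide_right_mono mult_left_mono) auto
      also have "\<dots> = p * S" by (simp add: p_def)
      also have "\<dots> \<le> (\<Sum>t=1..T. loss U (x t) (y t)) + K * L * (h U)\<^sup>2"
        by (rule key_ineq[OF K1 S0 h_nonneg[OF U] L_pos reg[OF U] p0 p1])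
      finally have A: "(exp lam - 1) * (\<Sum>t=1..T. e t) / lam \<le> (\<Sum>t=1..T. loss U (x t) (y t)) + K * L * (h U)\<^sup>2" .
      have B: "ln (1/\<delta>) / lam = (3 * K + 1) / 2 * ln (1 / \<delta>)" by (simp add: lam_def)
      have "M yp \<le> (exp lam - 1) * (\<Sum>t=1..T. e t) / lam + ln (1/\<delta>) / lam"
        using yp by (simp add: add_divide_distrib)
      then show "M yp \<le> (\<Sum>t=1..T. loss U (x t) (y t)) + K * L * (h U)\<^sup>2 + (3 * K + 1) / 2 * ln (1 / \<delta>)"
        using A B by linarith
    qed
    show "measure_pmf.prob P
           {yp. \<forall>U\<in>\<W>. (\<Sum>t=1..T. if yp t \<noteq> y t then 1 else 0 :: real)
               \<le> (\<Sum>t=1..T. loss U (x t) (y t)) + K * L * (h U)\<^sup>2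
                  + (3 * K + 1) / 2 * ln (1 / \<delta>)} \<ge> 1 - \<delta>"
    proof -
      have "measure_pmf.prob P {yp. M yp \<le> ((exp lam - 1) * (\<Sum>t=1..T. e t) + ln (1 / \<delta>)) / lam}
         \<le> measure_pmf.prob P {yp. \<forall>U\<in>\<W>. M yp \<le> (\<Sum>t=1..T. loss U (x t) (y t)) + K * L * (h U)\<^sup>2
                  + (3 * K + 1) / 2 * ln (1 / \<delta>)}"
        by (rule measure_pmf.finite_measure_mono[OF sub]) (simp only: sets_measure_pmf UNIV_I)
      then show ?thesis using ch unfolding M_def by linarith
    qed
  next
    show "\<forall>U\<in>\<W>. (\<Sum>t=1..T. loss U (x t) (y t)) = 0 \<longrightarrow>
           measure_pmf.prob P
             {yp. (\<Sum>t=1..T. if yp t \<noteq> y t then 1 else 0 :: real)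
                 \<le> 4 * L * (h U)\<^sup>2 + 11 / 4 * ln (1 / \<delta>)} \<ge> 1 - \<delta>"
    proof (intro ballI impI)
      fix U assume U: "U \<in> \<W>" and z: "(\<Sum>t=1..T. loss U (x t) (y t)) = 0"
      have SH: "S \<le> 2 * L * (h U)^2"
      proof (cases "S = 0")
        case True then show ?thesis using L_pos by simp
      next
        case False
        then have Sp: "S > 0" using S0 by simp
        define w where "w = h U * sqrt (2*L*S)"
        have Sw: "S \<le> w" using reg[OF U] z by (simp add: w_def)
        have w2: "w^2 = 2*L*(h U)^2*S" using L_pos S0 by (simp add: w_def power_mult_distrib)
        have "S^2 \<le> w^2" using Sw S0 by (intro power_mono) auto
        then have "S * S \<le> (2*L*(h U)^2) * S" using w2 by (simp add: power2_eq_square)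
        then show ?thesis using Sp by simp
      qed
      define lam :: real where "lam = 4/11"
      have lam0: "lam > 0" by (simp add: lam_def)
      have ch: "measure_pmf.prob P {yp. M yp \<le> ((exp lam - 1) * (\<Sum>t=1..T. e t) + ln (1 / \<delta>)) / lam} \<ge> 1 - \<delta>"
        unfolding P_eq M_def e_def using chernoff[OF lam0 delta(1)] by blast
      have c2: "(exp lam - 1) / lam \<le> 2" using const2 by (simp add: lam_def)
      have "(exp lam - 1) * (\<Sum>t=1..T. e t) / lam = ((exp lam - 1) / lam) * (\<Sum>t=1..T. e t)" by simp
      also have "\<dots> \<le> 2 * (\<Sum>t=1..T. e t)" using c2 sumE0 by (intro mult_right_mono) auto
      also have "\<dots> \<le> 2 * S"
      proof -
        have "(1 - 1/K) * S \<le> 1 * S" using K1 S0 by (intro mult_right_mono) auto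
        then show ?thesis using sumE by linarith
      qed
      also have "\<dots> \<le> 4 * L * (h U)^2" using SH by simp
      finally have A: "(exp lam - 1) * (\<Sum>t=1..T. e t) / lam \<le> 4 * L * (h U)^2" .
      have sub: "{yp. M yp \<le> ((exp lam - 1) * (\<Sum>t=1..T. e t) + ln (1 / \<delta>)) / lam} \<subseteq>
        {yp. M yp \<le> 4 * L * (h U)\<^sup>2 + 11 / 4 * ln (1 / \<delta>)}"
      proof (intro subsetI CollectI)
        fix yp assume yp: "yp \<in> {yp. M yp \<le> ((exp lam - 1) * (\<Sum>t=1..T. e t) + ln (1 / \<delta>)) / lam}"
        have B: "ln (1/\<delta>) / lam = 11 / 4 * ln (1 / \<delta>)" by (simp add: lam_def)
        have "M yp \<le> (exp lam - 1) * (\<Sum>t=1..T. e t) / lam + ln (1/\<delta>) / lam"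
          using yp by (simp add: add_divide_distrib)
        then show "M yp \<le> 4 * L * (h U)\<^sup>2 + 11 / 4 * ln (1 / \<delta>)" using A B by linarith
      qed
      show "measure_pmf.prob P
             {yp. (\<Sum>t=1..T. if yp t \<noteq> y t then 1 else 0 :: real)
                 \<le> 4 * L * (h U)\<^sup>2 + 11 / 4 * ln (1 / \<delta>)} \<ge> 1 - \<delta>"
      proof -
        have "measure_pmf.prob P {yp. M yp \<le> ((exp lam - 1) * (\<Sum>t=1..T. e t) + ln (1 / \<delta>)) / lam}
           \<le> measure_pmf.prob P {yp. M yp \<le> 4 * L * (h U)\<^sup>2 + 11 / 4 * ln (1 / \<delta>)}"
          by (rule measure_pmf.finite_measure_mono[OF sub]) (simp only: sets_measure_pmf UNIV_I)
        then show ?thesis using ch unfolding M_def by linarith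
      qed
    qed
  qed
qed

end
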